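(* Fix $\alpha,\beta\in(0,1)$ and $0<c<1/2$. There exist constants $C_\beta>0$ (depending only on $\beta$) and $K,L>0$ (depending only on $\alpha,\beta,c$) such that for the decoupled process with parameters $(\mathcal{P}_\infty,v_0,\mathcal{P}_\infty,\alpha,\beta)$ and all $t$, with probability at least $1-e^{-(1+o(1))t^{2c}}$ (the $o(1)$ tending to $0$ as $t\to\infty$) there exist indices $k_0<k_1<\dots<k_l$ with $l\ge L\,t^{0.5-c}$ such that the values $\sigma_{k_0}(t),\dots,\sigma_{k_l}(t)$ are pairwise distinct and, for each $i=0,1,\dots,l$, $$\big|\sigma_{k_i}(t)-\beta t-C_\beta\, t^{c}\sqrt{t}\, i\big|\le K\,t^{c}\sqrt{t}.$$
   Context: Decoupled process on the infinite path $\mathcal{P}_\infty$ with vertices $v_0\to v_1\to\cdots$, root $v_0$, $p(v_i)=v_{i-1}$. Fix $\alpha,\beta\in[0,1]$. Let $Z_0=+1$, $Z_1,Z_2,\dots$ i.i.d. uniform on $\{-1,+1\}$, $Z_\infty=\bot$; counter $\mathrm{count}_0=1$; $\mathrm{origin}_0(v_0)=0$ (and always $0$), $\mathrm{origin}_0(v_i)=\infty$ for $i\ge1$; $g_t(v)=Z_{\mathrm{origin}_t(v)}$. Update from $t$ to $t+1$ (independent choices): if $g_t(v)=g_t(p(v))=\bot$ then $\mathrm{origin}_{t+1}(v)=\infty$; if $g_t(v)=\bot\ne g_t(p(v))$: w.p. $1-\alpha$, $\mathrm{origin}_{t+1}(v)=\mathrm{origin}_t(p(v))$, and w.p. $\alpha$,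 $\mathrm{origin}_{t+1}(v)$ is the current counter value and the counter is incremented; if $g_t(v)\ne\bot$, $v\neq v_0$: w.p. $\beta$, $\mathrm{origin}_{t+1}(v)=\mathrm{origin}_t(p(v))$, otherwise unchanged. $k$-frontier: $\sigma_k(t)=\max\{i\in\mathbb{N}:\mathrm{origin}_t(v_i)\le k\}$. *)

theory Defs
  imports "HOL-Probability.Probability"
begin

text \<open>Decoupled process on the infinite path v_0 -> v_1 -> ..., vertex v_i encoded by i,
  parent of i (i >= 1) is i - 1. Origins: None encodes infinity.
  Randomness: A (t,i) = "new label" coin (prob alpha), B (t,i) = "copy parent" coin
  (prob beta), Z j = sign Z_j (True = +1) for j >= 1.\<close>

type_synonym dp_omega = "((nat \<times> nat \<Rightarrow> bool) \<times> (nat \<times> nat \<Rightarrow> bool) \<times> (nat \<Rightarrow> bool))"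

definition Zsign :: "(nat \<Rightarrow> bool) \<Rightarrow> nat \<Rightarrow> bool" where
  "Zsign Z j = (if j = 0 then True else Z j)"

definition gval :: "(nat \<Rightarrow> bool) \<Rightarrow> (nat \<Rightarrow> nat option) \<Rightarrow> nat \<Rightarrow> bool option" where
  "gval Z orig v = map_option (Zsign Z) (orig v)"

definition new_label :: "(nat \<times> nat \<Rightarrow> bool) \<Rightarrow> (nat \<Rightarrow> bool) \<Rightarrow> (nat \<Rightarrow> nat option) \<Rightarrow> nat \<Rightarrow> nat \<Rightarrow> bool" where
  "new_label A Z orig t j \<longleftrightarrow>
     1 \<le> j \<and> gval Z orig j = None \<and> gval Z orig (j - 1) \<noteq> None \<and> A (t, j)"

definition step_origin ::
  "(nat \<times> nat \<Rightarrow> bool) \<Rightarrow> (nat \<times> nat \<Rightarrow> bool) \<Rightarrow> (nat \<Rightarrow> bool) \<Rightarrow> nat \<Rightarrow>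
   (nat \<Rightarrow> nat option) \<Rightarrow> nat \<Rightarrow> nat \<Rightarrow> nat option" where
  "step_origin A B Z t orig cnt i =
     (if i = 0 then Some 0
      else if gval Z orig i = None then
        (if gval Z orig (i - 1) = None then None
         else if A (t, i) then Some (cnt + card {j. j < i \<and> new_label A Z orig t j})
         else orig (i - 1))
      else (if B (t, i) then orig (i - 1) else orig i))"

primrec dproc :: "dp_omega \<Rightarrow> nat \<Rightarrow> (nat \<Rightarrow> nat option) \<times> nat" where
  "dproc \<omega> 0 = ((\<lambda>i. if i = 0 then Some 0 else None), 1)"
| "dproc \<omega> (Suc t) =
     (case \<omega> of (A, B, Z) \<Rightarrow>
       (case dproc \<omega> t of (orig, cnt) \<Rightarrow>
          (step_origin A B Z t orig cnt, cnt + card {j. new_label A Z orig t j})))"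

definition origin :: "dp_omega \<Rightarrow> nat \<Rightarrow> nat \<Rightarrow> nat option" where
  "origin \<omega> t = fst (dproc \<omega> t)"

definition frontier :: "dp_omega \<Rightarrow> nat \<Rightarrow> nat \<Rightarrow> nat" where
  "frontier \<omega> k t = Max {i. \<exists>j. origin \<omega> t i = Some j \<and> j \<le> k}"

definition decoupled_space :: "real \<Rightarrow> real \<Rightarrow> dp_omega measure" where
  "decoupled_space \<alpha> \<beta> =
     (PiM UNIV (\<lambda>_::nat \<times> nat. measure_pmf (bernoulli_pmf \<alpha>)))
     \<Otimes>\<^sub>M ((PiM UNIV (\<lambda>_::nat \<times> nat. measure_pmf (bernoulli_pmf \<beta>)))
     \<Otimes>\<^sub>M (PiM UNIV (\<lambda>_::nat. measure_pmf (pmf_of_set (UNIV :: bool set)))))"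

end

theory Submission
  imports Defs "HOL-Real_Asymp.Real_Asymp"
begin


fun cntf :: "dp_omega \<Rightarrow> nat \<Rightarrow> nat" where
  "cntf \<omega> 0 = 1"
| "cntf \<omega> (Suc t) = cntf \<omega> t + (if fst \<omega> (t, Suc t) then 1 else 0)"

fun fr :: "dp_omega \<Rightarrow> nat \<Rightarrow> nat \<Rightarrow> nat" where
  "fr \<omega> k 0 = 0"
| "fr \<omega> k (Suc t) = (if fr \<omega> k t = t then (if fst \<omega> (t, Suc t) \<and> k < cntf \<omega> t then t else Suc t)
     else fr \<omega> k t + (if fst (snd \<omega>) (t, Suc (fr \<omega> k t)) then 1 else 0))"

lemma fr_le: "fr \<omega> k t \<le> t"
  by (induction t) auto

lemma newlabel_set:
  assumes occ: "\<And>i. orig i \<noteq> None \<longleftrightarrow> i \<le> t"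
  shows "{j. new_label A Z orig t j} = (if A (t, Suc t) then {Suc t} else {})"
proof -
  have "new_label A Z orig t j \<longleftrightarrow> (j = Suc t \<and> A (t, Suc t))" for j
  proof -
    have "(1 \<le> j \<and> orig j = None \<and> orig (j-1) \<noteq> None) \<longleftrightarrow> j = Suc t"
      using occ[of j] occ[of "j-1"] by auto
    then show ?thesis unfolding new_label_def gval_def by auto
  qed
  then show ?thesis by auto
qed

lemma step_simp:
  assumes occ: "\<And>i. orig i \<noteq> None \<longleftrightarrow> i \<le> t"
  shows "step_origin A B Z t orig cnt i =
    (if i = 0 then Some 0 else if i \<le> t then (if B (t, i) then orig (i - 1) else orig i)
     else if i = Suc t then (if A (t, Suc t) then Some cnt else orig t) else None)"
proof -
  have c: "card {j. j < Suc t \<and> new_label A Z orig t j} = 0"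
  proof -
    have "{j. j < Suc t \<and> new_label A Z orig t j} = {}"
    proof (rule ccontr)
      assume "{j. j < Suc t \<and> new_label A Z orig t j} \<noteq> {}"
      then obtain x where x: "x < Suc t" "new_label A Z orig t x" by auto
      then have "x \<in> {j. new_label A Z orig t j}" by simp
      then show False using newlabel_set[OF occ, of A Z] x(1) by (simp split: if_splits)
    qed
    then show ?thesis by simp
  qed
  show ?thesis
    using occ[of i] occ[of "i - 1"] c
    unfolding step_origin_def gval_def
    by (auto simp: not_le)
qed

lemma invariant:
  "snd (dproc \<omega> t) = cntf \<omega> t \<and> (\<forall>i. fst (dproc \<omega> t) i \<noteq> None \<longleftrightarrow> i \<le> t)
   \<and> fst (dproc \<omega> t) 0 = Some 0
   \<and> (\<forall>i j. fst (dproc \<omega> t) i = Some j \<longrightarrow> j < cntf \<omega> t)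
   \<and> (\<forall>i. (\<exists>j. fst (dproc \<omega> t) i = Some j \<and> j \<le> k) \<longleftrightarrow> i \<le> fr \<omega> k t)"
proof (induction t)
  case 0
  then show ?case by auto
next
  case (Suc t)
  obtain A B Z where om: "\<omega> = (A, B, Z)" by (cases \<omega>) auto
  obtain orig cnt where dp: "dproc \<omega> t = (orig, cnt)" by (cases "dproc \<omega> t") auto
  have cnt: "cnt = cntf \<omega> t" using Suc dp by simp
  have occ: "\<And>i. orig i \<noteq> None \<longleftrightarrow> i \<le> t" using Suc dp by simp
  have o0: "orig 0 = Some 0" using Suc dp by simp
  have lab: "\<And>i j. orig i = Some j \<Longrightarrow> j < cnt" using Suc dp cnt by simp
  have good: "\<And>i. (\<exists>j. orig i = Some j \<and> j \<le> k) \<longleftrightarrow> i \<le> fr \<omega> k t" using Suc dp by simp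
  have ds: "dproc \<omega> (Suc t) = (step_origin A B Z t orig cnt, cnt + card {j. new_label A Z orig t j})"
    using dp om by simp
  have st: "\<And>i. step_origin A B Z t orig cnt i =
    (if i = 0 then Some 0 else if i \<le> t then (if B (t, i) then orig (i - 1) else orig i)
     else if i = Suc t then (if A (t, Suc t) then Some cnt else orig t) else None)"
    by (rule step_simp[OF occ])
  have A_eq: "fst \<omega> = A" and B_eq: "fst (snd \<omega>) = B" using om by auto
  have cs: "cnt + card {j. new_label A Z orig t j} = cntf \<omega> (Suc t)"
    using newlabel_set[OF occ, of A Z] cnt om by auto
  have frt: "fr \<omega> k t \<le> t" by (rule fr_le)
  show ?case
  proof (intro conjI allI impI)
    show "snd (dproc \<omega> (Suc t)) = cntf \<omega> (Suc t)" using ds cs by simp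
  next
    fix i show "fst (dproc \<omega> (Suc t)) i \<noteq> None \<longleftrightarrow> i \<le> Suc t"
      using ds st occ[of i] occ[of "i - 1"] occ[of t] by auto
  next
    show "fst (dproc \<omega> (Suc t)) 0 = Some 0" using ds st by simp
  next
    fix i j assume "fst (dproc \<omega> (Suc t)) i = Some j"
    then have "step_origin A B Z t orig cnt i = Some j" using ds by simp
    have cle: "cnt \<le> cntf \<omega> (Suc t)" using cnt by simp
    consider "i = 0" | "0 < i" "i \<le> t" | "i = Suc t" | "i > Suc t" by linarith
    then show "j < cntf \<omega> (Suc t)"
    proof cases
      case 1 then show ?thesis using \<open>step_origin A B Z t orig cnt i = Some j\<close> st[of i] lab[of 0 0] o0 cle cnt by simp
    next
      case 2
      then have "orig (i - 1) = Some j \<or> orig i = Some j"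
        using \<open>step_origin A B Z t orig cnt i = Some j\<close> st[of i] by (simp split: if_splits)
      then show ?thesis using lab cle by (meson order_less_le_trans)
    next
      case 3
      then have "(A (t, Suc t) \<and> j = cnt) \<or> orig t = Some j"
        using \<open>step_origin A B Z t orig cnt i = Some j\<close> st[of i] by (simp split: if_splits)
      then show ?thesis
      proof
        assume "A (t, Suc t) \<and> j = cnt" then show ?thesis using cnt A_eq by simp
      next
        assume "orig t = Some j" then show ?thesis using lab cle by (meson order_less_le_trans)
      qed
    next
      case 4
      then show ?thesis using \<open>step_origin A B Z t orig cnt i = Some j\<close> st[of i] by simp
    qed
  next
    fix i
    show "(\<exists>j. fst (dproc \<omega> (Suc t)) i = Some j \<and> j \<le> k) \<longleftrightarrow> i \<le> fr \<omega> k (Suc t)"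
    proof -
      have L: "(\<exists>j. fst (dproc \<omega> (Suc t)) i = Some j \<and> j \<le> k) \<longleftrightarrow>
               (\<exists>j. step_origin A B Z t orig cnt i = Some j \<and> j \<le> k)" using ds by simp
      consider "i = 0" | "0 < i" "i \<le> t" | "i = Suc t" | "i > Suc t" by linarith
      then show ?thesis
      proof cases
        case 1 then show ?thesis using L st by simp
      next
        case 2
        have e: "(\<exists>j. step_origin A B Z t orig cnt i = Some j \<and> j \<le> k) \<longleftrightarrow>
            (if B (t, i) then i - 1 \<le> fr \<omega> k t else i \<le> fr \<omega> k t)"
          using st[of i] 2 good[of i] good[of "i - 1"] by auto
        show ?thesis unfolding L e using 2 frt B_eq
          by (cases "fr \<omega> k t = t"; cases "i = Suc (fr \<omega> k t)") auto
      next
        case 3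
        have lt: "fr \<omega> k t < t \<Longrightarrow> k < cnt"
        proof -
          assume "fr \<omega> k t < t"
          then have "\<not> (\<exists>j. orig t = Some j \<and> j \<le> k)" using good[of t] by simp
          moreover obtain j where "orig t = Some j" using occ[of t] by auto
          ultimately show "k < cnt" using lab by force
        qed
        have e: "(\<exists>j. step_origin A B Z t orig cnt i = Some j \<and> j \<le> k) \<longleftrightarrow>
            (if A (t, Suc t) then cnt \<le> k else t \<le> fr \<omega> k t)"
          using st[of i] 3 good[of t] by auto
        show ?thesis unfolding L e using 3 frt A_eq lt cnt
          by (cases "fr \<omega> k t = t") auto
      next
        case 4
        then show ?thesis using L st[of i] fr_le[of \<omega> k "Suc t"] by auto
      qed
    qed
  qed
qed

lemma frontier_eq: "frontier \<omega> k t = fr \<omega> k t"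
proof -
  have "{i. \<exists>j. origin \<omega> t i = Some j \<and> j \<le> k} = {..fr \<omega> k t}"
    using invariant[of \<omega> t k] by (auto simp: origin_def)
  then show ?thesis unfolding frontier_def by (simp add: Max_eq_iff)
qed


lemma space_PiM_pmf: "space (PiM UNIV (\<lambda>_. measure_pmf p)) = UNIV"
  by (simp add: space_PiM)

lemma space_dec: "space (decoupled_space \<alpha> \<beta>) = UNIV"
  by (simp add: decoupled_space_def space_pair_measure space_PiM)

lemma prob_dec: "prob_space (decoupled_space \<alpha> \<beta>)"
  unfolding decoupled_space_def
  by (intro prob_space_pair prob_space_PiM measure_pmf.prob_space_axioms)

lemma cyl_emb:
  fixes J :: "'i set"
  assumes "finite J" "0 \<le> p" "p \<le> 1"
  shows "emeasure (PiM UNIV (\<lambda>_::'i. measure_pmf (bernoulli_pmf p)))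
      (prod_emb UNIV (\<lambda>_. measure_pmf (bernoulli_pmf p)) J (PiE J (\<lambda>x. {v x})))
    = ennreal (\<Prod>x\<in>J. if v x then p else 1 - p)"
proof -
  have "emeasure (PiM UNIV (\<lambda>_::'i. measure_pmf (bernoulli_pmf p)))
      (prod_emb UNIV (\<lambda>_. measure_pmf (bernoulli_pmf p)) J (PiE J (\<lambda>x. {v x})))
     = (\<Prod>x\<in>J. emeasure (measure_pmf (bernoulli_pmf p)) {v x})"
    using assms by (intro emeasure_PiM_emb) (auto intro: measure_pmf.prob_space_axioms)
  also have "\<dots> = (\<Prod>x\<in>J. ennreal (if v x then p else 1 - p))"
    using assms by (intro prod.cong) (auto simp: emeasure_pmf_single)
  also have "\<dots> = ennreal (\<Prod>x\<in>J. if v x then p else 1 - p)"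
    using assms by (intro prod_ennreal) auto
  finally show ?thesis .
qed

lemma prod_emb_eq: "prod_emb UNIV (\<lambda>_. measure_pmf q) J (PiE J (\<lambda>x. {v x})) = {f. \<forall>x\<in>J. f x = v x}"
  unfolding prod_emb_def by (auto simp: PiE_iff)

lemma eqB:
  "{\<omega> :: dp_omega. \<forall>x\<in>J. fst (snd \<omega>) x = v x} =
    space (PiM UNIV (\<lambda>_::nat \<times> nat. measure_pmf (bernoulli_pmf \<alpha>))) \<times>
   (prod_emb UNIV (\<lambda>_. measure_pmf (bernoulli_pmf \<beta>)) J (PiE J (\<lambda>x. {v x})) \<times>
    space (PiM UNIV (\<lambda>_::nat. measure_pmf (pmf_of_set (UNIV :: bool set)))))"
proof (intro set_eqI)
  fix \<omega> :: dp_omega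
  obtain a b z where "\<omega> = (a, b, z)" by (cases \<omega>) auto
  then show "\<omega> \<in> {\<omega> :: dp_omega. \<forall>x\<in>J. fst (snd \<omega>) x = v x} \<longleftrightarrow> \<omega> \<in> space (PiM UNIV (\<lambda>_::nat \<times> nat. measure_pmf (bernoulli_pmf \<alpha>))) \<times>
   (prod_emb UNIV (\<lambda>_. measure_pmf (bernoulli_pmf \<beta>)) J (PiE J (\<lambda>x. {v x})) \<times>
    space (PiM UNIV (\<lambda>_::nat. measure_pmf (pmf_of_set (UNIV :: bool set)))))"
    by (simp only: prod_emb_eq space_PiM_pmf mem_Times_iff fst_conv snd_conv mem_Collect_eq UNIV_I simp_thms)
qed
lemma eqA:
  "{\<omega> :: dp_omega. \<forall>x\<in>J. fst \<omega> x = v x} =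
   prod_emb UNIV (\<lambda>_. measure_pmf (bernoulli_pmf \<alpha>)) J (PiE J (\<lambda>x. {v x})) \<times>
    space (PiM UNIV (\<lambda>_::nat \<times> nat. measure_pmf (bernoulli_pmf \<beta>)) \<Otimes>\<^sub>M
      PiM UNIV (\<lambda>_::nat. measure_pmf (pmf_of_set (UNIV :: bool set))))"
proof (intro set_eqI)
  fix \<omega> :: dp_omega
  obtain a b z where "\<omega> = (a, b, z)" by (cases \<omega>) auto
  then show "\<omega> \<in> {\<omega> :: dp_omega. \<forall>x\<in>J. fst \<omega> x = v x} \<longleftrightarrow> \<omega> \<in> prod_emb UNIV (\<lambda>_. measure_pmf (bernoulli_pmf \<alpha>)) J (PiE J (\<lambda>x. {v x})) \<times>
    space (PiM UNIV (\<lambda>_::nat \<times> nat. measure_pmf (bernoulli_pmf \<beta>)) \<Otimes>\<^sub>M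
      PiM UNIV (\<lambda>_::nat. measure_pmf (pmf_of_set (UNIV :: bool set))))"
    by (simp only: prod_emb_eq space_pair_measure space_PiM_pmf mem_Times_iff fst_conv snd_conv mem_Collect_eq UNIV_I simp_thms)
qed

lemma cylB:
  assumes "finite J" "0 \<le> \<beta>" "\<beta> \<le> 1"
  shows "measure (decoupled_space \<alpha> \<beta>) {\<omega>. \<forall>x\<in>J. fst (snd \<omega>) x = v x}
         = (\<Prod>x\<in>J. if v x then \<beta> else 1 - \<beta>)"
    and "{\<omega>. \<forall>x\<in>J. fst (snd \<omega>) x = v x} \<in> sets (decoupled_space \<alpha> \<beta>)"
proof -
  let ?PA = "PiM UNIV (\<lambda>_::nat \<times> nat. measure_pmf (bernoulli_pmf \<alpha>))"
  let ?PB = "PiM UNIV (\<lambda>_::nat \<times> nat. measure_pmf (bernoulli_pmf \<beta>))"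
  let ?PZ = "PiM UNIV (\<lambda>_::nat. measure_pmf (pmf_of_set (UNIV :: bool set)))"
  let ?X = "prod_emb UNIV (\<lambda>_. measure_pmf (bernoulli_pmf \<beta>)) J (PiE J (\<lambda>x. {v x}))"
  have pB: "prob_space ?PB" by (intro prob_space_PiM measure_pmf.prob_space_axioms)
  have pZ: "prob_space ?PZ" by (intro prob_space_PiM measure_pmf.prob_space_axioms)
  have pA: "prob_space ?PA" by (intro prob_space_PiM measure_pmf.prob_space_axioms)
  have sfBZ: "sigma_finite_measure (?PB \<Otimes>\<^sub>M ?PZ)"
    by (intro prob_space_imp_sigma_finite prob_space_pair pB pZ)
  have sfZ: "sigma_finite_measure ?PZ" by (intro prob_space_imp_sigma_finite pZ)
  have Xs: "?X \<in> sets ?PB" using assms by (intro sets_PiM_I) auto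
  have Ys: "?X \<times> space ?PZ \<in> sets (?PB \<Otimes>\<^sub>M ?PZ)" by (intro pair_measureI Xs sets.top)
  have eq: "{\<omega>. \<forall>x\<in>J. fst (snd \<omega>) x = v x} = space ?PA \<times> (?X \<times> space ?PZ)"
    by (rule eqB)
  show "{\<omega>. \<forall>x\<in>J. fst (snd \<omega>) x = v x} \<in> sets (decoupled_space \<alpha> \<beta>)"
    unfolding eq decoupled_space_def by (intro pair_measureI Ys sets.top)
  have "emeasure (decoupled_space \<alpha> \<beta>) {\<omega>. \<forall>x\<in>J. fst (snd \<omega>) x = v x}
     = emeasure ?PA (space ?PA) * emeasure (?PB \<Otimes>\<^sub>M ?PZ) (?X \<times> space ?PZ)"
    unfolding eq decoupled_space_def
    by (rule sigma_finite_measure.emeasure_pair_measure_Times[OF sfBZ sets.top Ys])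
  also have "emeasure (?PB \<Otimes>\<^sub>M ?PZ) (?X \<times> space ?PZ) = emeasure ?PB ?X * emeasure ?PZ (space ?PZ)"
    by (rule sigma_finite_measure.emeasure_pair_measure_Times[OF sfZ Xs sets.top])
  also have "emeasure ?PA (space ?PA) = 1" by (rule prob_space.emeasure_space_1[OF pA])
  also have "emeasure ?PZ (space ?PZ) = 1" by (rule prob_space.emeasure_space_1[OF pZ])
  also have "emeasure ?PB ?X = ennreal (\<Prod>x\<in>J. if v x then \<beta> else 1 - \<beta>)"
    using assms by (intro cyl_emb) auto
  finally have E: "emeasure (decoupled_space \<alpha> \<beta>) {\<omega>. \<forall>x\<in>J. fst (snd \<omega>) x = v x}
         = ennreal (\<Prod>x\<in>J. if v x then \<beta> else 1 - \<beta>)" by simp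
  show "measure (decoupled_space \<alpha> \<beta>) {\<omega>. \<forall>x\<in>J. fst (snd \<omega>) x = v x}
         = (\<Prod>x\<in>J. if v x then \<beta> else 1 - \<beta>)"
    unfolding measure_def E using assms by (intro enn2real_ennreal prod_nonneg) auto
qed

lemma cylA:
  assumes "finite J" "0 \<le> \<alpha>" "\<alpha> \<le> 1"
  shows "measure (decoupled_space \<alpha> \<beta>) {\<omega>. \<forall>x\<in>J. fst \<omega> x = v x}
         = (\<Prod>x\<in>J. if v x then \<alpha> else 1 - \<alpha>)"
    and "{\<omega>. \<forall>x\<in>J. fst \<omega> x = v x} \<in> sets (decoupled_space \<alpha> \<beta>)"
proof -
  let ?PA = "PiM UNIV (\<lambda>_::nat \<times> nat. measure_pmf (bernoulli_pmf \<alpha>))"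
  let ?PB = "PiM UNIV (\<lambda>_::nat \<times> nat. measure_pmf (bernoulli_pmf \<beta>))"
  let ?PZ = "PiM UNIV (\<lambda>_::nat. measure_pmf (pmf_of_set (UNIV :: bool set)))"
  let ?X = "prod_emb UNIV (\<lambda>_. measure_pmf (bernoulli_pmf \<alpha>)) J (PiE J (\<lambda>x. {v x}))"
  have pB: "prob_space ?PB" by (intro prob_space_PiM measure_pmf.prob_space_axioms)
  have pZ: "prob_space ?PZ" by (intro prob_space_PiM measure_pmf.prob_space_axioms)
  have pBZ: "prob_space (?PB \<Otimes>\<^sub>M ?PZ)" by (intro prob_space_pair pB pZ)
  have sfBZ: "sigma_finite_measure (?PB \<Otimes>\<^sub>M ?PZ)"
    by (intro prob_space_imp_sigma_finite pBZ)
  have Xs: "?X \<in> sets ?PA" using assms by (intro sets_PiM_I) auto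
  have eq: "{\<omega>. \<forall>x\<in>J. fst \<omega> x = v x} = ?X \<times> space (?PB \<Otimes>\<^sub>M ?PZ)"
    by (rule eqA)
  show "{\<omega>. \<forall>x\<in>J. fst \<omega> x = v x} \<in> sets (decoupled_space \<alpha> \<beta>)"
    unfolding eq decoupled_space_def by (intro pair_measureI Xs sets.top)
  have "emeasure (decoupled_space \<alpha> \<beta>) {\<omega>. \<forall>x\<in>J. fst \<omega> x = v x}
     = emeasure ?PA ?X * emeasure (?PB \<Otimes>\<^sub>M ?PZ) (space (?PB \<Otimes>\<^sub>M ?PZ))"
    unfolding eq decoupled_space_def
    by (rule sigma_finite_measure.emeasure_pair_measure_Times[OF sfBZ Xs sets.top])
  also have "emeasure (?PB \<Otimes>\<^sub>M ?PZ) (space (?PB \<Otimes>\<^sub>M ?PZ)) = 1"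
    by (rule prob_space.emeasure_space_1[OF pBZ])
  also have "emeasure ?PA ?X = ennreal (\<Prod>x\<in>J. if v x then \<alpha> else 1 - \<alpha>)"
    using assms by (intro cyl_emb) auto
  finally have E: "emeasure (decoupled_space \<alpha> \<beta>) {\<omega>. \<forall>x\<in>J. fst \<omega> x = v x}
         = ennreal (\<Prod>x\<in>J. if v x then \<alpha> else 1 - \<alpha>)" by simp
  show "measure (decoupled_space \<alpha> \<beta>) {\<omega>. \<forall>x\<in>J. fst \<omega> x = v x}
         = (\<Prod>x\<in>J. if v x then \<alpha> else 1 - \<alpha>)"
    unfolding measure_def E using assms by (intro enn2real_ennreal prod_nonneg) auto
qed


fun walk :: "dp_omega \<Rightarrow> nat \<Rightarrow> nat \<Rightarrow> nat \<Rightarrow> nat" where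
  "walk \<omega> u0 x0 0 = x0"
| "walk \<omega> u0 x0 (Suc n) = walk \<omega> u0 x0 n + (if fst (snd \<omega>) (u0 + n, Suc (walk \<omega> u0 x0 n)) then 1 else 0)"

lemma walk_le: "walk \<omega> u0 x0 n \<le> x0 + n"
  by (induction n) auto

lemma walk_ge: "x0 \<le> walk \<omega> u0 x0 n"
  by (induction n) auto

lemma fr_walk:
  assumes "fr \<omega> k u0 = x0" "x0 < u0"
  shows "fr \<omega> k (u0 + n) = walk \<omega> u0 x0 n"
proof (induction n)
  case 0 then show ?case using assms by simp
next
  case (Suc n)
  have "walk \<omega> u0 x0 n < u0 + n" using walk_le[of \<omega> u0 x0 n] assms(2) by simp
  then show ?case using Suc by (simp add: add.commute)
qed

lemma cntf_mono: "t \<le> t' \<Longrightarrow> cntf \<omega> t \<le> cntf \<omega> t'"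
  by (induction t' rule: dec_induct) auto

lemma fr_full: "cntf \<omega> t \<le> Suc k \<Longrightarrow> fr \<omega> k t = t"
proof (induction t)
  case 0 then show ?case by simp
next
  case (Suc t)
  have "cntf \<omega> t \<le> Suc k" using Suc.prems cntf_mono[of t "Suc t" \<omega>] by simp
  then have e: "fr \<omega> k t = t" using Suc.IH by simp
  show ?case
  proof (cases "fst \<omega> (t, Suc t)")
    case True
    then have "\<not> k < cntf \<omega> t" using Suc.prems by simp
    then show ?thesis using e by simp
  qed (use e in simp)
qed

lemma edge_stay:
  assumes "fr \<omega> k \<tau> = \<tau>" "k < cntf \<omega> \<tau>" "\<forall>j<a. \<not> fst \<omega> (\<tau> + j, Suc (\<tau> + j))"
  shows "fr \<omega> k (\<tau> + a) = \<tau> + a"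
  using assms(3)
proof (induction a)
  case 0 then show ?case using assms by simp
next
  case (Suc a)
  then have "fr \<omega> k (\<tau> + a) = \<tau> + a" by simp
  moreover have "\<not> fst \<omega> (\<tau> + a, Suc (\<tau> + a))" using Suc.prems by simp
  ultimately show ?case by simp
qed

lemma edge_leave:
  assumes "fr \<omega> k \<tau> = \<tau>" "k < cntf \<omega> \<tau>" "\<forall>j<a. \<not> fst \<omega> (\<tau> + j, Suc (\<tau> + j))"
    and "fst \<omega> (\<tau> + a, Suc (\<tau> + a))"
  shows "fr \<omega> k (Suc (\<tau> + a)) = \<tau> + a"
proof -
  have "fr \<omega> k (\<tau> + a) = \<tau> + a" by (rule edge_stay[OF assms(1-3)])
  moreover have "k < cntf \<omega> (\<tau> + a)" using assms(2) cntf_mono[of \<tau> "\<tau> + a" \<omega>] by simp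
  ultimately show ?thesis using assms(4) by simp
qed

lemma dep:
  assumes "\<forall>u<t. \<forall>i\<le>Suc u. fst \<omega> (u,i) = fst \<omega>' (u,i) \<and> fst (snd \<omega>) (u,i) = fst (snd \<omega>') (u,i)"
  shows "cntf \<omega> t = cntf \<omega>' t \<and> fr \<omega> k t = fr \<omega>' k t"
  using assms
proof (induction t)
  case 0 then show ?case by simp
next
  case (Suc t)
  then have IH: "cntf \<omega> t = cntf \<omega>' t" "fr \<omega> k t = fr \<omega>' k t" by auto
  have A: "fst \<omega> (t, Suc t) = fst \<omega>' (t, Suc t)" using Suc.prems by auto
  have B: "fr \<omega> k t \<noteq> t \<Longrightarrow> fst (snd \<omega>) (t, Suc (fr \<omega> k t)) = fst (snd \<omega>') (t, Suc (fr \<omega> k t))"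
    using Suc.prems fr_le[of \<omega> k t] by auto
  show ?case using IH A B by auto
qed

lemma meas_dep:
  fixes X :: "dp_omega set"
  assumes F: "finite F" and a: "0 \<le> \<alpha>" "\<alpha> \<le> 1" and b: "0 \<le> \<beta>" "\<beta> \<le> 1"
    and inv: "\<And>\<omega> \<omega>'. (\<forall>x\<in>F. fst \<omega> x = fst \<omega>' x \<and> fst (snd \<omega>) x = fst (snd \<omega>') x) \<Longrightarrow> \<omega> \<in> X \<Longrightarrow> \<omega>' \<in> X"
  shows "X \<in> sets (decoupled_space \<alpha> \<beta>)"
proof -
  define C where "C = (\<lambda>(ab :: (nat \<times> nat \<Rightarrow> bool) \<times> (nat \<times> nat \<Rightarrow> bool)).
     {\<omega>::dp_omega. \<forall>x\<in>F. fst \<omega> x = fst ab x} \<inter> {\<omega>. \<forall>x\<in>F. fst (snd \<omega>) x = snd ab x})"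
  define g where "g = (\<lambda>\<omega>::dp_omega. (restrict (fst \<omega>) F, restrict (fst (snd \<omega>)) F))"
  have X: "X = (\<Union>\<omega>\<in>X. C (g \<omega>))"
  proof (intro set_eqI iffI)
    fix \<omega> assume "\<omega> \<in> X" then show "\<omega> \<in> (\<Union>\<omega>\<in>X. C (g \<omega>))" by (auto simp: C_def g_def)
  next
    fix \<omega> assume "\<omega> \<in> (\<Union>\<omega>\<in>X. C (g \<omega>))"
    then obtain \<omega>0 where "\<omega>0 \<in> X" "\<omega> \<in> C (g \<omega>0)" by auto
    then show "\<omega> \<in> X" by (intro inv[of \<omega>0 \<omega>]) (auto simp: C_def g_def)
  qed
  have fin: "finite (g ` X)"
  proof (rule finite_subset)
    show "g ` X \<subseteq> (PiE F (\<lambda>_. UNIV)) \<times> (PiE F (\<lambda>_. UNIV))" by (auto simp: g_def)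
    show "finite ((PiE F (\<lambda>_. UNIV :: bool set)) \<times> (PiE F (\<lambda>_. UNIV :: bool set)))"
      using F by (intro finite_cartesian_product finite_PiE) auto
  qed
  have "(\<Union>\<omega>\<in>X. C (g \<omega>)) = \<Union> (C ` (g ` X))" by auto
  also have "\<dots> \<in> sets (decoupled_space \<alpha> \<beta>)"
  proof (rule sets.finite_Union)
    show "finite (C ` g ` X)" using fin by simp
    show "C ` g ` X \<subseteq> sets (decoupled_space \<alpha> \<beta>)"
    proof
      fix Y assume "Y \<in> C ` g ` X"
      then obtain ab where "Y = C ab" by auto
      then show "Y \<in> sets (decoupled_space \<alpha> \<beta>)"
        unfolding C_def using cylA(2)[OF F a, where v="fst ab" and \<beta>=\<beta>] cylB(2)[OF F b, where v="snd ab" and \<alpha>=\<alpha>]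
        by (auto simp: case_prod_beta)
    qed
  qed
  finally show ?thesis using X by simp
qed


definition wt :: "real \<Rightarrow> bool \<Rightarrow> bool list \<Rightarrow> real" where
  "wt p v bs = (\<Prod>j<length bs. if bs ! j = v then p else 1 - p)"

definition cntv :: "bool \<Rightarrow> bool list \<Rightarrow> nat" where
  "cntv v bs = length (filter (\<lambda>b. b = v) bs)"

lemma wt_Cons: "wt p v (b # bs) = (if b = v then p else 1 - p) * wt p v bs"
  unfolding wt_def length_Cons prod.lessThan_Suc_shift by simp

lemma wt_nonneg: "0 \<le> p \<Longrightarrow> p \<le> 1 \<Longrightarrow> 0 \<le> wt p v bs"
  unfolding wt_def by (intro prod_nonneg) auto

lemma wt_flip: "wt p True bs = wt (1 - p) False bs"
  unfolding wt_def by (intro prod.cong) auto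

lemma cntv_Cons: "cntv v (b # bs) = (if b = v then 1 else 0) + cntv v bs"
  unfolding cntv_def by simp

lemma cntv_sum: "cntv True bs + cntv False bs = length bs"
  unfolding cntv_def by (induction bs) auto

lemma lists_Suc: "{bs :: bool list. length bs = Suc n} = Cons True ` {bs. length bs = n} \<union> Cons False ` {bs. length bs = n}"
proof (intro set_eqI iffI)
  fix bs :: "bool list" assume "bs \<in> {bs. length bs = Suc n}"
  then obtain b cs where "bs = b # cs" "length cs = n" by (cases bs) auto
  then show "bs \<in> Cons True ` {bs. length bs = n} \<union> Cons False ` {bs. length bs = n}"
    by (cases b) auto
qed auto

lemma fin_lists: "finite {bs :: bool list. length bs = n}"
  using finite_lists_length_eq[of "UNIV :: bool set" n] by simp

lemma mgf_lists:
  fixes h :: real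
  shows "(\<Sum>bs\<in>{bs. length bs = n}. wt p v bs * exp (h * cntv v bs)) = ((1 - p) + p * exp h) ^ n"
proof (induction n)
  case 0
  then show ?case by (simp add: wt_def cntv_def)
next
  case (Suc n)
  let ?L = "{bs :: bool list. length bs = n}"
  let ?f = "\<lambda>bs. wt p v bs * exp (h * cntv v bs)"
  have fin: "finite ?L" by (rule fin_lists)
  have "(\<Sum>bs\<in>{bs. length bs = Suc n}. ?f bs) = sum ?f (Cons True ` ?L) + sum ?f (Cons False ` ?L)"
    unfolding lists_Suc using fin by (intro sum.union_disjoint) auto
  also have "\<dots> = (\<Sum>bs\<in>?L. ?f (True # bs)) + (\<Sum>bs\<in>?L. ?f (False # bs))"
    by (simp add: sum.reindex)
  also have "\<dots> = ((1 - p) + p * exp h) * (\<Sum>bs\<in>?L. ?f bs)"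
  proof -
    have "?f (True # bs) + ?f (False # bs) = ((1 - p) + p * exp h) * ?f bs" for bs
      by (cases v) (auto simp: wt_Cons cntv_Cons exp_add distrib_left distrib_right algebra_simps)
    then have "(\<Sum>bs\<in>?L. ?f (True # bs)) + (\<Sum>bs\<in>?L. ?f (False # bs)) = (\<Sum>bs\<in>?L. ((1 - p) + p * exp h) * ?f bs)"
      by (simp add: sum.distrib[symmetric])
    then show ?thesis by (simp add: sum_distrib_left)
  qed
  finally show ?case using Suc by simp
qed

lemma mgf_bound:
  fixes p h :: real
  assumes "0 \<le> p" "p \<le> 1" "0 \<le> h"
  shows "(1 - p) + p * exp h \<le> exp (h * p + h\<^sup>2 / 8)"
proof -
  have "exp h \<ge> 1" using assms(3) by simp
  then have "p * (exp h - 1) \<ge> 0" using assms by simp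
  then have pos: "0 < 1 + p * (exp h - 1)" by linarith
  have "-h * p + ln (1 + p * (exp h - 1)) \<le> h\<^sup>2 / 8"
    using Hoeffdings_lemma_aux[of h p] assms by simp
  then have "ln (1 + p * (exp h - 1)) \<le> h * p + h\<^sup>2 / 8" by simp
  then have le: "exp (ln (1 + p * (exp h - 1))) \<le> exp (h * p + h\<^sup>2 / 8)" by (simp only: exp_le_cancel_iff)
  have "1 + p * (exp h - 1) = exp (ln (1 + p * (exp h - 1)))" using pos by simp
  also have "\<dots> \<le> exp (h * p + h\<^sup>2 / 8)" by (rule le)
  finally show ?thesis by (simp add: algebra_simps)
qed

lemma chernoff_lists:
  assumes p: "0 \<le> p" "p \<le> 1" and n: "n > 0" and d: "d \<ge> 0"
  shows "(\<Sum>bs\<in>{bs. length bs = n \<and> real (cntv v bs) \<ge> p * n + d}. wt p v bs) \<le> exp (- 2 * d\<^sup>2 / n)"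
proof -
  define h where "h = 4 * d / n"
  have h0: "h \<ge> 0" using d n by (simp add: h_def)
  let ?L = "{bs :: bool list. length bs = n}"
  have fin: "finite ?L" by (rule fin_lists)
  have "(\<Sum>bs\<in>{bs. length bs = n \<and> real (cntv v bs) \<ge> p * n + d}. wt p v bs)
      \<le> (\<Sum>bs\<in>{bs. length bs = n \<and> real (cntv v bs) \<ge> p * n + d}. wt p v bs * exp (h * (cntv v bs - (p * n + d))))"
  proof (intro sum_mono)
    fix bs assume "bs \<in> {bs. length bs = n \<and> real (cntv v bs) \<ge> p * n + d}"
    then have "1 \<le> exp (h * (cntv v bs - (p * n + d)))" using h0 by simp
    then show "wt p v bs \<le> wt p v bs * exp (h * (cntv v bs - (p * n + d)))"
      using wt_nonneg[OF p, of v bs] by (metis mult_left_mono mult.right_neutral)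
  qed
  also have "\<dots> \<le> (\<Sum>bs\<in>?L. wt p v bs * exp (h * (cntv v bs - (p * n + d))))"
    using fin wt_nonneg[OF p] by (intro sum_mono2) auto
  also have "\<dots> = (\<Sum>bs\<in>?L. exp (- h * (p * n + d)) * (wt p v bs * exp (h * cntv v bs)))"
  proof (intro sum.cong refl)
    fix bs
    have "exp (h * (cntv v bs - (p * n + d))) = exp (- h * (p * n + d)) * exp (h * cntv v bs)"
      by (simp add: exp_add[symmetric] algebra_simps)
    then show "wt p v bs * exp (h * (cntv v bs - (p * n + d))) = exp (- h * (p * n + d)) * (wt p v bs * exp (h * cntv v bs))"
      by simp
  qed
  also have "\<dots> = exp (- h * (p * n + d)) * (\<Sum>bs\<in>?L. wt p v bs * exp (h * cntv v bs))"
    by (simp add: sum_distrib_left)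
  also have "\<dots> = exp (- h * (p * n + d)) * ((1 - p) + p * exp h) ^ n"
    by (simp add: mgf_lists)
  also have "\<dots> \<le> exp (- h * (p * n + d)) * exp (h * p + h\<^sup>2 / 8) ^ n"
    using mgf_bound[OF p h0] p by (intro mult_left_mono power_mono) (auto intro: add_nonneg_nonneg)
  also have "\<dots> = exp (- h * d + n * h\<^sup>2 / 8)"
    by (simp add: exp_of_nat_mult[symmetric] exp_add[symmetric] algebra_simps)
  also have "- h * d + n * h\<^sup>2 / 8 = - 2 * d\<^sup>2 / n"
    using n by (simp add: h_def power2_eq_square field_simps)
  finally show ?thesis .
qed


definition Jset :: "nat \<Rightarrow> nat \<Rightarrow> bool list \<Rightarrow> (nat \<times> nat) set" where
  "Jset u0 x0 bs = (\<lambda>j. (u0 + j, Suc (x0 + cntv True (take j bs)))) ` {..<length bs}"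

definition Ecyl :: "nat \<Rightarrow> nat \<Rightarrow> bool list \<Rightarrow> dp_omega set" where
  "Ecyl u0 x0 bs = {\<omega>. \<forall>x\<in>Jset u0 x0 bs. fst (snd \<omega>) x = bs ! (fst x - u0)}"

lemma Ecyl_iff: "\<omega> \<in> Ecyl u0 x0 bs \<longleftrightarrow>
   (\<forall>j<length bs. fst (snd \<omega>) (u0 + j, Suc (x0 + cntv True (take j bs))) = bs ! j)"
  unfolding Ecyl_def Jset_def by auto

lemma Ecyl_meas:
  assumes "0 \<le> \<beta>" "\<beta> \<le> 1"
  shows "measure (decoupled_space \<alpha> \<beta>) (Ecyl u0 x0 bs) = wt \<beta> True bs"
    and "Ecyl u0 x0 bs \<in> sets (decoupled_space \<alpha> \<beta>)"
proof -
  have fin: "finite (Jset u0 x0 bs)" unfolding Jset_def by simp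
  have "measure (decoupled_space \<alpha> \<beta>) (Ecyl u0 x0 bs) =
      (\<Prod>x\<in>Jset u0 x0 bs. if bs ! (fst x - u0) then \<beta> else 1 - \<beta>)"
    unfolding Ecyl_def by (rule cylB(1)[OF fin assms])
  also have "\<dots> = (\<Prod>j<length bs. if bs ! j then \<beta> else 1 - \<beta>)"
    unfolding Jset_def by (subst prod.reindex) (auto simp: inj_on_def)
  also have "\<dots> = wt \<beta> True bs" unfolding wt_def by simp
  finally show "measure (decoupled_space \<alpha> \<beta>) (Ecyl u0 x0 bs) = wt \<beta> True bs" .
  show "Ecyl u0 x0 bs \<in> sets (decoupled_space \<alpha> \<beta>)"
    unfolding Ecyl_def by (rule cylB(2)[OF fin assms])
qed

lemma cntv_append: "cntv v (xs @ ys) = cntv v xs + cntv v ys"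
  unfolding cntv_def by simp

lemma walk_on_E:
  assumes "\<omega> \<in> Ecyl u0 x0 bs" "j \<le> length bs"
  shows "walk \<omega> u0 x0 j = x0 + cntv True (take j bs)"
  using assms(2)
proof (induction j)
  case 0 then show ?case by (simp add: cntv_def)
next
  case (Suc j)
  then have j: "j < length bs" by simp
  have IH: "walk \<omega> u0 x0 j = x0 + cntv True (take j bs)" using Suc by simp
  have B: "fst (snd \<omega>) (u0 + j, Suc (x0 + cntv True (take j bs))) = bs ! j"
    using assms(1) j by (simp add: Ecyl_iff)
  show ?case using IH B j by (simp add: take_Suc_conv_app_nth cntv_append cntv_def)
qed

definition pathof :: "dp_omega \<Rightarrow> nat \<Rightarrow> nat \<Rightarrow> nat \<Rightarrow> bool list" where
  "pathof \<omega> u0 x0 n = map (\<lambda>j. fst (snd \<omega>) (u0 + j, Suc (walk \<omega> u0 x0 j))) [0..<n]"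

lemma pathof_walk:
  "j \<le> n \<Longrightarrow> walk \<omega> u0 x0 j = x0 + cntv True (take j (pathof \<omega> u0 x0 n))"
proof (induction j)
  case 0 then show ?case by (simp add: cntv_def)
next
  case (Suc j)
  then have j: "j < n" by simp
  have "take (Suc j) (pathof \<omega> u0 x0 n) = take j (pathof \<omega> u0 x0 n) @ [fst (snd \<omega>) (u0 + j, Suc (walk \<omega> u0 x0 j))]"
    using j by (simp add: take_Suc_conv_app_nth pathof_def)
  then show ?case using Suc j by (simp add: cntv_append cntv_def)
qed

lemma in_own_E: "\<omega> \<in> Ecyl u0 x0 (pathof \<omega> u0 x0 n)"
proof -
  have "\<forall>j<n. fst (snd \<omega>) (u0 + j, Suc (x0 + cntv True (take j (pathof \<omega> u0 x0 n)))) = pathof \<omega> u0 x0 n ! j"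
    using pathof_walk[of _ n \<omega> u0 x0] by (simp add: pathof_def)
  then show ?thesis by (simp add: Ecyl_iff pathof_def)
qed

lemma walk_tail:
  assumes b: "0 \<le> \<beta>" "\<beta> \<le> 1" and n: "n > 0" and d: "d \<ge> 0"
  shows "\<exists>S\<in>sets (decoupled_space \<alpha> \<beta>).
     {\<omega>. d \<le> \<bar>real (walk \<omega> u0 x0 n) - real x0 - \<beta> * n\<bar>} \<subseteq> S \<and>
     measure (decoupled_space \<alpha> \<beta>) S \<le> 2 * exp (- 2 * d\<^sup>2 / n)"
proof -
  let ?M = "decoupled_space \<alpha> \<beta>"
  define Bad where "Bad = {bs. length bs = n \<and> d \<le> \<bar>real (cntv True bs) - \<beta> * n\<bar>}"
  define Up where "Up = {bs. length bs = n \<and> real (cntv True bs) \<ge> \<beta> * n + d}"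
  define Lo where "Lo = {bs. length bs = n \<and> real (cntv False bs) \<ge> (1 - \<beta>) * n + d}"
  define S where "S = (\<Union>bs\<in>Bad. Ecyl u0 x0 bs)"
  have finBad: "finite Bad" unfolding Bad_def by (rule finite_subset[OF _ fin_lists[of n]]) auto
  have finUp: "finite Up" unfolding Up_def by (rule finite_subset[OF _ fin_lists[of n]]) auto
  have finLo: "finite Lo" unfolding Lo_def by (rule finite_subset[OF _ fin_lists[of n]]) auto
  have Ssets: "S \<in> sets ?M" unfolding S_def using finBad Ecyl_meas(2)[OF b] by auto
  have sub: "{\<omega>. d \<le> \<bar>real (walk \<omega> u0 x0 n) - real x0 - \<beta> * n\<bar>} \<subseteq> S"
  proof
    fix \<omega> assume "\<omega> \<in> {\<omega>. d \<le> \<bar>real (walk \<omega> u0 x0 n) - real x0 - \<beta> * n\<bar>}"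
    then have w: "d \<le> \<bar>real (walk \<omega> u0 x0 n) - real x0 - \<beta> * n\<bar>" by simp
    let ?bs = "pathof \<omega> u0 x0 n"
    have len: "length ?bs = n" by (simp add: pathof_def)
    have "walk \<omega> u0 x0 n = x0 + cntv True ?bs" using pathof_walk[of n n \<omega> u0 x0] len by simp
    then have "?bs \<in> Bad" using w len unfolding Bad_def by simp
    then show "\<omega> \<in> S" unfolding S_def using in_own_E[of \<omega> u0 x0 n] by auto
  qed
  have "measure ?M S \<le> (\<Sum>bs\<in>Bad. measure ?M (Ecyl u0 x0 bs))"
    unfolding S_def using finBad Ecyl_meas(2)[OF b] by (intro measure_UNION_le) auto
  also have "\<dots> = (\<Sum>bs\<in>Bad. wt \<beta> True bs)" using Ecyl_meas(1)[OF b] by simp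
  also have "\<dots> \<le> (\<Sum>bs\<in>Up \<union> Lo. wt \<beta> True bs)"
  proof (rule sum_mono2)
    show "finite (Up \<union> Lo)" using finUp finLo by simp
    show "Bad \<subseteq> Up \<union> Lo"
    proof
      fix bs assume "bs \<in> Bad"
      then have l: "length bs = n" and dd: "d \<le> \<bar>real (cntv True bs) - \<beta> * n\<bar>" unfolding Bad_def by auto
      have s: "real (cntv True bs) + real (cntv False bs) = n" using cntv_sum[of bs] l by (metis of_nat_add)
      show "bs \<in> Up \<union> Lo" using dd s l unfolding Up_def Lo_def by (auto simp: algebra_simps abs_if split: if_splits)
    qed
    show "\<And>b. b \<in> Up \<union> Lo - Bad \<Longrightarrow> 0 \<le> wt \<beta> True b" using wt_nonneg[OF b] by simp
  qed
  also have "\<dots> \<le> (\<Sum>bs\<in>Up. wt \<beta> True bs) + (\<Sum>bs\<in>Lo. wt \<beta> True bs)"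
  proof -
    have "sum (wt \<beta> True) (Up \<union> Lo) = sum (wt \<beta> True) Up + sum (wt \<beta> True) Lo - sum (wt \<beta> True) (Up \<inter> Lo)"
      by (rule sum_Un) (use finUp finLo in auto)
    moreover have "0 \<le> sum (wt \<beta> True) (Up \<inter> Lo)" using wt_nonneg[OF b] by (intro sum_nonneg) auto
    ultimately show ?thesis by linarith
  qed
  also have "(\<Sum>bs\<in>Up. wt \<beta> True bs) \<le> exp (- 2 * d\<^sup>2 / n)"
    unfolding Up_def by (rule chernoff_lists[OF b n d])
  also have "(\<Sum>bs\<in>Lo. wt \<beta> True bs) = (\<Sum>bs\<in>Lo. wt (1 - \<beta>) False bs)" by (simp add: wt_flip)
  also have "\<dots> \<le> exp (- 2 * d\<^sup>2 / n)"
    unfolding Lo_def using b by (intro chernoff_lists[OF _ _ n d]) auto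
  finally show ?thesis using Ssets sub by auto
qed


definition goodP :: "real \<Rightarrow> real \<Rightarrow> nat \<Rightarrow> (nat \<Rightarrow> nat) \<Rightarrow> bool" where
  "goodP \<beta> c t \<sigma> = (\<exists>l :: nat. real l \<ge> (1 - \<beta>) / 6 * real t powr (1/2 - c) \<and>
     (\<exists>k :: nat \<Rightarrow> nat. strict_mono_on {..l} k \<and> inj_on (\<lambda>i. \<sigma> (k i)) {..l} \<and>
       (\<forall>i \<le> l. \<bar>real (\<sigma> (k i)) - \<beta> * real t - 3 * real t powr c * sqrt (real t) * real i\<bar>
                  \<le> 3/2 * real t powr c * sqrt (real t))))"

lemma cntf_pos: "1 \<le> cntf \<omega> t"
  using cntf_mono[of 0 t \<omega>] by simp

lemma good_meas:
  assumes a: "0 \<le> \<alpha>" "\<alpha> \<le> 1" and b: "0 \<le> \<beta>" "\<beta> \<le> 1"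
  shows "{\<omega> \<in> space (decoupled_space \<alpha> \<beta>). goodP \<beta> c t (\<lambda>k. frontier \<omega> k t)} \<in> sets (decoupled_space \<alpha> \<beta>)"
proof (rule meas_dep[where F = "{(u, i). u < t \<and> i \<le> Suc u}", OF _ a b])
  show "finite {(u, i). u < t \<and> i \<le> Suc u}"
    by (rule finite_subset[of _ "{..t} \<times> {..Suc t}"]) auto
next
  fix \<omega> \<omega>' :: dp_omega
  assume ag: "\<forall>x\<in>{(u, i). u < t \<and> i \<le> Suc u}. fst \<omega> x = fst \<omega>' x \<and> fst (snd \<omega>) x = fst (snd \<omega>') x"
    and m: "\<omega> \<in> {\<omega> \<in> space (decoupled_space \<alpha> \<beta>). goodP \<beta> c t (\<lambda>k. frontier \<omega> k t)}"
  have "(\<lambda>k. frontier \<omega> k t) = (\<lambda>k. frontier \<omega>' k t)"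
  proof
    fix k
    have "\<forall>u<t. \<forall>i\<le>Suc u. fst \<omega> (u,i) = fst \<omega>' (u,i) \<and> fst (snd \<omega>) (u,i) = fst (snd \<omega>') (u,i)"
      using ag by auto
    then show "frontier \<omega> k t = frontier \<omega>' k t" using dep[of t \<omega> \<omega>' k] by (simp add: frontier_eq)
  qed
  then show "\<omega>' \<in> {\<omega> \<in> space (decoupled_space \<alpha> \<beta>). goodP \<beta> c t (\<lambda>k. frontier \<omega> k t)}"
    using m by (simp add: space_dec)
qed

lemma BA_meas:
  assumes a: "0 \<le> \<alpha>" "\<alpha> \<le> 1"
  shows "measure (decoupled_space \<alpha> \<beta>) {\<omega>. \<forall>x\<in>(\<lambda>j. (\<tau> + j, Suc (\<tau> + j))) ` {..w}. fst \<omega> x = False}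
           = (1 - \<alpha>) ^ Suc w"
    and "{\<omega>. \<forall>x\<in>(\<lambda>j. (\<tau> + j, Suc (\<tau> + j))) ` {..w}. fst \<omega> x = False} \<in> sets (decoupled_space \<alpha> \<beta>)"
proof -
  have fin: "finite ((\<lambda>j. (\<tau> + j, Suc (\<tau> + j))) ` {..w})" by simp
  have "measure (decoupled_space \<alpha> \<beta>) {\<omega>. \<forall>x\<in>(\<lambda>j. (\<tau> + j, Suc (\<tau> + j))) ` {..w}. fst \<omega> x = (\<lambda>_. False) x}
     = (\<Prod>x\<in>(\<lambda>j. (\<tau> + j, Suc (\<tau> + j))) ` {..w}. if (\<lambda>_. False) x then \<alpha> else 1 - \<alpha>)"
    by (rule cylA(1)[OF fin a])
  also have "\<dots> = (1 - \<alpha>) ^ Suc w"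
    by (simp add: card_image inj_on_def)
  finally show "measure (decoupled_space \<alpha> \<beta>) {\<omega>. \<forall>x\<in>(\<lambda>j. (\<tau> + j, Suc (\<tau> + j))) ` {..w}. fst \<omega> x = False}
           = (1 - \<alpha>) ^ Suc w" by simp
  have "{\<omega>. \<forall>x\<in>(\<lambda>j. (\<tau> + j, Suc (\<tau> + j))) ` {..w}. fst \<omega> x = (\<lambda>_. False) x} \<in> sets (decoupled_space \<alpha> \<beta>)"
    by (rule cylA(2)[OF fin a])
  then show "{\<omega>. \<forall>x\<in>(\<lambda>j. (\<tau> + j, Suc (\<tau> + j))) ` {..w}. fst \<omega> x = False} \<in> sets (decoupled_space \<alpha> \<beta>)"
    by simp
qed

lemma front_walk:
  assumes A1: "fst \<omega> (\<tau> + a, Suc (\<tau> + a))" and A0: "\<forall>j<a. \<not> fst \<omega> (\<tau> + j, Suc (\<tau> + j))"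
    and lt: "Suc (\<tau> + a) \<le> t"
  shows "frontier \<omega> (cntf \<omega> \<tau> - 1) t = walk \<omega> (Suc (\<tau> + a)) (\<tau> + a) (t - Suc (\<tau> + a))"
proof -
  let ?k = "cntf \<omega> \<tau> - 1"
  have c1: "1 \<le> cntf \<omega> \<tau>" by (rule cntf_pos)
  have f: "fr \<omega> ?k \<tau> = \<tau>" by (rule fr_full) (use c1 in simp)
  have k: "?k < cntf \<omega> \<tau>" using c1 by simp
  have e: "fr \<omega> ?k (Suc (\<tau> + a)) = \<tau> + a" by (rule edge_leave[OF f k A0 A1])
  have "fr \<omega> ?k (Suc (\<tau> + a) + (t - Suc (\<tau> + a))) = walk \<omega> (Suc (\<tau> + a)) (\<tau> + a) (t - Suc (\<tau> + a))"
    by (rule fr_walk[OF e]) simp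
  then show ?thesis using lt by (simp add: frontier_eq)
qed

lemma cntf_step:
  assumes "fst \<omega> (m, Suc m)" "\<tau> \<le> m" "Suc m \<le> \<tau>'"
  shows "cntf \<omega> \<tau> < cntf \<omega> \<tau>'"
proof -
  have "cntf \<omega> \<tau> \<le> cntf \<omega> m" by (rule cntf_mono) fact
  also have "\<dots> < cntf \<omega> (Suc m)" using assms(1) by simp
  also have "\<dots> \<le> cntf \<omega> \<tau>'" by (rule cntf_mono) fact
  finally show ?thesis .
qed


lemma dev_arith:
  fixes W x0 n t \<tau> a i g s \<beta> :: real
  assumes "\<bar>W - x0 - \<beta> * n\<bar> < s" "t = x0 + 1 + n" "x0 = \<tau> + a" "i * g - 1 < \<tau>" "\<tau> \<le> i * g"
    "0 \<le> a" "a \<le> s / 4" "(1 - \<beta>) * g = 3 * s" "0 < \<beta>" "\<beta> < 1" "8 \<le> s"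
  shows "\<bar>W - \<beta> * t - 3 * s * i\<bar> < 3/2 * s"
proof -
  have i3: "3 * s * i = (1 - \<beta>) * g * i" using assms(8) by simp
  have e: "W - \<beta> * t - 3 * s * i = (1 - \<beta>) * (\<tau> + a - i * g) - \<beta> + (W - x0 - \<beta> * n)"
    unfolding i3 using assms(2,3) by (simp add: algebra_simps)
  have u: "(1 - \<beta>) * (\<tau> + a - i * g) \<le> (1 - \<beta>) * (s / 4)"
    using assms by (intro mult_left_mono) auto
  have u2: "(1 - \<beta>) * (s / 4) \<le> s / 4" using assms by (simp add: mult_le_cancel_right1)
  have lo: "(1 - \<beta>) * (-1) \<le> (1 - \<beta>) * (\<tau> + a - i * g)"
    using assms by (intro mult_left_mono) auto
  define D where "D = W - x0 - \<beta> * n"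
  have D: "- s < D" "D < s" using assms(1) unfolding D_def by auto
  define E where "E = (1 - \<beta>) * (\<tau> + a - i * g)"
  have lo': "\<beta> - 1 \<le> E" using lo unfolding E_def by (simp add: algebra_simps)
  have E: "-1 \<le> E" "E \<le> s / 4" using u u2 lo' assms(9,10) unfolding E_def by linarith+
  have e': "W - \<beta> * t - 3 * s * i = E - \<beta> + D" unfolding e E_def D_def by simp
  have "E - \<beta> + D < 3/2 * s" using E D assms(9,11) by linarith
  moreover have "- (3/2 * s) < E - \<beta> + D" using E D assms(10,11) by linarith
  ultimately show ?thesis unfolding e' abs_less_iff by simp
qed

lemma fixed_t:
  fixes \<alpha> \<beta> c :: real and t :: nat
  assumes a: "0 < \<alpha>" "\<alpha> < 1" and b: "0 < \<beta>" "\<beta> < 1" and cc: "0 < c" "c < 1/2"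
  assumes H1: "8 \<le> real t powr (c + 1/2)"
    and H2: "(3 / (1 - \<beta>) + 1/4) * real t powr (c + 1/2) + 2 \<le> real t / 2"
    and H3: "(real t + 1) * exp (ln (1 - \<alpha>) * real t powr (c + 1/2) / 4)
             + 2 * (real t + 1)^2 * exp (- 2 * real t powr (2*c)) \<le> exp (- (real t powr (2*c)))"
  shows "1 - exp (- (real t powr (2*c))) \<le>
    measure (decoupled_space \<alpha> \<beta>) {\<omega> \<in> space (decoupled_space \<alpha> \<beta>). goodP \<beta> c t (\<lambda>k. frontier \<omega> k t)}"
proof -
  define M where "M = decoupled_space \<alpha> \<beta>"
  interpret P: prob_space M unfolding M_def by (rule prob_dec)
  define s where "s = real t powr (c + 1/2)"
  have s8: "8 \<le> s" using H1 s_def by simp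
  have t0: "t > 0" using H1 by (cases "t = 0") auto
  have tpos: "real t > 0" using t0 by simp
  have seq: "real t powr c * sqrt (real t) = s"
    unfolding s_def using tpos by (simp add: powr_add powr_half_sqrt[symmetric])
  have s2: "s^2 / real t = real t powr (2*c)"
  proof -
    have "s^2 = real t powr (2*c) * real t powr 1"
      unfolding s_def power2_eq_square powr_add[symmetric] by (simp add: algebra_simps)
    then show ?thesis using tpos by simp
  qed
  define g where "g = 3 * s / (1 - \<beta>)"
  have g1: "(1 - \<beta>) * g = 3 * s" using b by (simp add: g_def)
  have g0: "g \<ge> 0" using b s8 by (simp add: g_def)
  have gs: "3 * s \<le> g"
  proof -
    have "(1 - \<beta>) * g \<le> 1 * g" using b g0 by (intro mult_right_mono) auto
    then show ?thesis using g1 by simp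
  qed
  define w where "w = nat \<lfloor>s / 4\<rfloor>"
  have w1: "real w \<le> s / 4" using s8 unfolding w_def by linarith
  have w2: "s / 4 < real w + 1" using s8 unfolding w_def by linarith
  define X where "X = (1 - \<beta>) / 6 * real t powr (1/2 - c)"
  define l where "l = nat \<lceil>X\<rceil>"
  have X0: "X \<ge> 0" using b by (simp add: X_def)
  have l1: "X \<le> real l" unfolding l_def by (rule real_nat_ceiling_ge)
  have l2: "real l < X + 1" unfolding l_def using X0 by linarith
  have Xg: "X * g = real t / 2"
  proof -
    have "real t powr (1/2 - c) * real t powr (c + 1/2) = real t"
      using tpos by (simp add: powr_add[symmetric])
    then show ?thesis using b unfolding X_def g_def s_def by (simp add: field_simps)
  qed
  have lg: "real l * g \<le> real t / 2 + g"
  proof -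
    have "real l * g \<le> (X + 1) * g" using l2 g0 by (intro mult_right_mono) auto
    then show ?thesis using Xg by (simp add: distrib_right)
  qed
  have H2': "g + s / 4 + 2 \<le> real t / 2" using H2 unfolding g_def s_def by (simp add: algebra_simps)
  define \<tau> where "\<tau> i = nat \<lfloor>real i * g\<rfloor>" for i
  have \<tau>1: "real (\<tau> i) \<le> real i * g" for i unfolding \<tau>_def using g0 by simp
  have \<tau>2: "real i * g - 1 < real (\<tau> i)" for i unfolding \<tau>_def using g0 by linarith
  have \<tau>t: "\<tau> i + w + 2 \<le> t" if "i \<le> l" for i
  proof -
    have "real i * g \<le> real l * g" using that g0 by (intro mult_right_mono) auto
    then have "real (\<tau> i) + real w + 2 \<le> real t" using \<tau>1[of i] lg w1 H2' by linarith
    then show ?thesis by linarith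
  qed
  have \<tau>gap: "\<tau> i + w + 1 \<le> \<tau> j" if "i < j" for i j
  proof -
    have "real i + 1 \<le> real j" using that by simp
    then have "(real i + 1) * g \<le> real j * g" using g0 by (intro mult_right_mono) auto
    then have "real (\<tau> i) + real w + 1 < real (\<tau> j)" using \<tau>1[of i] \<tau>2[of j] w1 gs s8
      by (simp add: distrib_right)
    then show ?thesis by linarith
  qed
  define n where "n i a = t - Suc (\<tau> i + a)" for i a
  have npos: "n i a > 0" "Suc (\<tau> i + a) + n i a = t" if "i \<le> l" "a \<le> w" for i a
    using \<tau>t[OF that(1)] that(2) unfolding n_def by auto
  have ex: "\<forall>p. \<exists>S. (fst p \<le> l \<and> snd p \<le> w) \<longrightarrow> (S \<in> sets M \<and>
      {\<omega>. s \<le> \<bar>real (walk \<omega> (Suc (\<tau> (fst p) + snd p)) (\<tau> (fst p) + snd p) (n (fst p) (snd p)))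
              - real (\<tau> (fst p) + snd p) - \<beta> * real (n (fst p) (snd p))\<bar>} \<subseteq> S \<and>
      measure M S \<le> 2 * exp (- 2 * s\<^sup>2 / real (n (fst p) (snd p))))"
  proof
    fix p :: "nat \<times> nat"
    show "\<exists>S. (fst p \<le> l \<and> snd p \<le> w) \<longrightarrow> (S \<in> sets M \<and>
      {\<omega>. s \<le> \<bar>real (walk \<omega> (Suc (\<tau> (fst p) + snd p)) (\<tau> (fst p) + snd p) (n (fst p) (snd p)))
              - real (\<tau> (fst p) + snd p) - \<beta> * real (n (fst p) (snd p))\<bar>} \<subseteq> S \<and>
      measure M S \<le> 2 * exp (- 2 * s\<^sup>2 / real (n (fst p) (snd p))))"
    proof (cases "fst p \<le> l \<and> snd p \<le> w")
      case True
      then have "n (fst p) (snd p) > 0" using npos by auto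
      from walk_tail[OF _ _ this, of \<beta> s \<alpha> "Suc (\<tau> (fst p) + snd p)" "\<tau> (fst p) + snd p"] b s8
      show ?thesis unfolding M_def by auto
    qed auto
  qed
  obtain SB where SB: "\<And>p. fst p \<le> l \<Longrightarrow> snd p \<le> w \<Longrightarrow> SB p \<in> sets M \<and>
      {\<omega>. s \<le> \<bar>real (walk \<omega> (Suc (\<tau> (fst p) + snd p)) (\<tau> (fst p) + snd p) (n (fst p) (snd p)))
              - real (\<tau> (fst p) + snd p) - \<beta> * real (n (fst p) (snd p))\<bar>} \<subseteq> SB p \<and>
      measure M (SB p) \<le> 2 * exp (- 2 * s\<^sup>2 / real (n (fst p) (snd p)))"
    using choice[OF ex] by blast
  have SBm: "measure M (SB (i, a)) \<le> 2 * exp (- 2 * real t powr (2*c))" if "i \<le> l" "a \<le> w" for i a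
  proof -
    have np: "0 < real (n i a)" "real (n i a) \<le> real t" using npos[OF that] by auto
    have "s\<^sup>2 / real t \<le> s\<^sup>2 / real (n i a)" using np by (intro divide_left_mono) auto
    then have ee: "exp (- 2 * s\<^sup>2 / real (n i a)) \<le> exp (- 2 * real t powr (2*c))" using s2 by simp
    have "measure M (SB (i, a)) \<le> 2 * exp (- 2 * s\<^sup>2 / real (n i a))" using SB[of "(i, a)"] that by simp
    then show ?thesis using ee by linarith
  qed
  define BA where "BA i = {\<omega> :: dp_omega. \<forall>x\<in>(\<lambda>j. (\<tau> i + j, Suc (\<tau> i + j))) ` {..w}. fst \<omega> x = False}" for i
  have BAs: "BA i \<in> sets M" for i unfolding BA_def M_def using a by (intro BA_meas(2)) auto
  have BAm: "measure M (BA i) = (1 - \<alpha>) ^ Suc w" for i unfolding BA_def M_def using a by (intro BA_meas(1)) auto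
  define Bad where "Bad = (\<Union>i\<in>{..l}. BA i \<union> (\<Union>a\<in>{..w}. SB (i, a)))"
  have SBs: "SB (i, a) \<in> sets M" if "i \<le> l" "a \<le> w" for i a using SB[of "(i, a)"] that by simp
  have Bads: "Bad \<in> sets M" unfolding Bad_def
    by (intro sets.finite_UN finite_atMost sets.Un BAs) (auto intro: SBs)
  have mBad: "measure M Bad \<le> exp (- (real t powr (2*c)))"
  proof -
    have "measure M Bad \<le> (\<Sum>i\<in>{..l}. measure M (BA i \<union> (\<Union>a\<in>{..w}. SB (i, a))))"
      unfolding Bad_def by (intro measure_UNION_le finite_atMost sets.Un BAs sets.finite_UN) (auto intro: SBs)
    also have "\<dots> \<le> (\<Sum>i\<in>{..l}. (1 - \<alpha>) ^ Suc w + real (Suc w) * (2 * exp (- 2 * real t powr (2*c))))"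
    proof (intro sum_mono)
      fix i assume i: "i \<in> {..l}"
      have "measure M (BA i \<union> (\<Union>a\<in>{..w}. SB (i, a))) \<le> measure M (BA i) + measure M (\<Union>a\<in>{..w}. SB (i, a))"
        using i by (intro measure_Un_le BAs sets.finite_UN finite_atMost) (auto intro: SBs)
      also have "measure M (\<Union>a\<in>{..w}. SB (i, a)) \<le> (\<Sum>a\<in>{..w}. measure M (SB (i, a)))"
        using i by (intro measure_UNION_le finite_atMost) (auto intro: SBs)
      also have "\<dots> \<le> (\<Sum>a\<in>{..w}. 2 * exp (- 2 * real t powr (2*c)))"
        using SBm i by (intro sum_mono) auto
      finally show "measure M (BA i \<union> (\<Union>a\<in>{..w}. SB (i, a))) \<le> (1 - \<alpha>) ^ Suc w + real (Suc w) * (2 * exp (- 2 * real t powr (2*c)))"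
        using BAm by simp
    qed
    also have "\<dots> = real (Suc l) * ((1 - \<alpha>) ^ Suc w + real (Suc w) * (2 * exp (- 2 * real t powr (2*c))))"
      by simp
    also have "\<dots> \<le> (real t + 1) * (exp (ln (1 - \<alpha>) * s / 4) + (real t + 1) * (2 * exp (- 2 * real t powr (2*c))))"
    proof -
      have "real l \<le> real l * g" using gs s8 by (simp add: mult_le_cancel_left1)
      then have "real l \<le> real t" using lg H2' s8 by linarith
      then have A1: "real (Suc l) \<le> real t + 1" by simp
      have "(1 - \<alpha>) ^ Suc w = exp (ln (1 - \<alpha>)) ^ Suc w" using a by simp
      also have "\<dots> = exp (real (Suc w) * ln (1 - \<alpha>))" by (rule exp_of_nat_mult[symmetric])
      also have "\<dots> \<le> exp (ln (1 - \<alpha>) * s / 4)"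
      proof -
        have "ln (1 - \<alpha>) < 0" using a by simp
        then have "real (Suc w) * ln (1 - \<alpha>) \<le> (s / 4) * ln (1 - \<alpha>)"
          using w2 by (intro mult_right_mono_neg) auto
        then show ?thesis by (simp add: mult.commute)
      qed
      finally have A2: "(1 - \<alpha>) ^ Suc w \<le> exp (ln (1 - \<alpha>) * s / 4)" .
      have "real (Suc w) \<le> real t + 1" using w1 H2' g0 by simp
      then have A3: "real (Suc w) * (2 * exp (- 2 * real t powr (2*c))) \<le> (real t + 1) * (2 * exp (- 2 * real t powr (2*c)))"
        by (intro mult_right_mono) auto
      have sum: "(1 - \<alpha>) ^ Suc w + real (Suc w) * (2 * exp (- 2 * real t powr (2*c)))
          \<le> exp (ln (1 - \<alpha>) * s / 4) + (real t + 1) * (2 * exp (- 2 * real t powr (2*c)))"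
        using A2 A3 by linarith
      have nn: "0 \<le> (1 - \<alpha>) ^ Suc w + real (Suc w) * (2 * exp (- 2 * real t powr (2*c)))"
        using a by (intro add_nonneg_nonneg mult_nonneg_nonneg) auto
      show ?thesis by (rule mult_mono[OF A1 sum]) (use nn in auto)
    qed
    also have "\<dots> = (real t + 1) * exp (ln (1 - \<alpha>) * real t powr (c + 1/2) / 4)
             + 2 * (real t + 1)^2 * exp (- 2 * real t powr (2*c))"
      unfolding s_def by (simp add: algebra_simps power2_eq_square)
    also have "\<dots> \<le> exp (- (real t powr (2*c)))" by (rule H3)
    finally show ?thesis .
  qed
  define G where "G = {\<omega> \<in> space M. goodP \<beta> c t (\<lambda>k. frontier \<omega> k t)}"
  have Gs: "G \<in> sets M" unfolding G_def M_def using a b by (intro good_meas) auto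
  have sub: "space M - Bad \<subseteq> G"
  proof
    fix \<omega> assume \<omega>: "\<omega> \<in> space M - Bad"
    have nBA: "\<omega> \<notin> BA i" if "i \<le> l" for i using \<omega> that unfolding Bad_def by auto
    have nSB: "\<omega> \<notin> SB (i, a)" if "i \<le> l" "a \<le> w" for i a using \<omega> that unfolding Bad_def by auto
    have exA: "\<exists>j. fst \<omega> (\<tau> i + j, Suc (\<tau> i + j)) \<and> j \<le> w" if "i \<le> l" for i
      using nBA[OF that] unfolding BA_def by auto
    define aa where "aa i = (LEAST j. fst \<omega> (\<tau> i + j, Suc (\<tau> i + j)))" for i
    have aA: "fst \<omega> (\<tau> i + aa i, Suc (\<tau> i + aa i))" if "i \<le> l" for i
      using exA[OF that] unfolding aa_def by (metis (mono_tags, lifting) LeastI)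
    have a0: "\<forall>j<aa i. \<not> fst \<omega> (\<tau> i + j, Suc (\<tau> i + j))" for i
      unfolding aa_def using not_less_Least by blast
    have aw: "aa i \<le> w" if "i \<le> l" for i
      using exA[OF that] unfolding aa_def by (meson Least_le order_trans)
    define k where "k i = cntf \<omega> (\<tau> i) - 1" for i
    define F where "F i = frontier \<omega> (k i) t" for i
    have Fw: "F i = walk \<omega> (Suc (\<tau> i + aa i)) (\<tau> i + aa i) (n i (aa i))" if "i \<le> l" for i
      unfolding F_def k_def n_def using front_walk[OF aA[OF that] a0] npos[OF that aw[OF that]] by simp
    have dev: "\<bar>real (F i) - \<beta> * real t - 3 * s * real i\<bar> < 3/2 * s" if "i \<le> l" for i
    proof (rule dev_arith)
      have "\<not> s \<le> \<bar>real (walk \<omega> (Suc (\<tau> i + aa i)) (\<tau> i + aa i) (n i (aa i)))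
              - real (\<tau> i + aa i) - \<beta> * real (n i (aa i))\<bar>"
        using SB[of "(i, aa i)"] nSB[OF that aw[OF that]] that aw[OF that] by auto
      then show "\<bar>real (F i) - real (\<tau> i + aa i) - \<beta> * real (n i (aa i))\<bar> < s"
        using Fw[OF that] by simp
      show "real t = real (\<tau> i + aa i) + 1 + real (n i (aa i))"
        using npos(2)[OF that aw[OF that]] by linarith
      show "real (\<tau> i + aa i) = real (\<tau> i) + real (aa i)" by simp
      show "real i * g - 1 < real (\<tau> i)" by (rule \<tau>2)
      show "real (\<tau> i) \<le> real i * g" by (rule \<tau>1)
      show "real (aa i) \<le> s / 4" using aw[OF that] w1 by linarith
    qed (use g1 b s8 in auto)
    have kmono: "k i < k j" if "i < j" "j \<le> l" for i j
    proof -
      have "cntf \<omega> (\<tau> i) < cntf \<omega> (\<tau> j)"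
        using cntf_step[OF aA[of i], of "\<tau> i" "\<tau> j"] that \<tau>gap[OF that(1)] aw[of i] by auto
      then show ?thesis unfolding k_def using cntf_pos[of \<omega> "\<tau> i"] by simp
    qed
    have Fmono: "F i < F j" if "i < j" "j \<le> l" for i j
    proof -
      have "real i + 1 \<le> real j" using that by simp
      then have "3 * s * (real i + 1) \<le> 3 * s * real j" using s8 by (intro mult_left_mono) auto
      moreover have "real (F i) - \<beta> * real t - 3 * s * real i < 3/2 * s"
        using dev[of i] that by (auto simp only: abs_less_iff)
      moreover have "- (3/2 * s) < real (F j) - \<beta> * real t - 3 * s * real j"
      proof -
        have "\<bar>real (F j) - \<beta> * real t - 3 * s * real j\<bar> < 3/2 * s" using dev[of j] that by simp
        then show ?thesis by arith
      qed
      ultimately have "real (F i) < real (F j)" by (simp add: distrib_left) 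
      then show ?thesis by simp
    qed
    have "goodP \<beta> c t (\<lambda>k. frontier \<omega> k t)"
      unfolding goodP_def
    proof (intro exI conjI allI impI)
      show "(1 - \<beta>) / 6 * real t powr (1/2 - c) \<le> real l" using l1 X_def by simp
      show "strict_mono_on {..l} k" by (intro strict_mono_onI) (use kmono in auto)
      show "inj_on (\<lambda>i. frontier \<omega> (k i) t) {..l}"
        by (rule strict_mono_on_imp_inj_on, intro strict_mono_onI) (use Fmono in \<open>auto simp: F_def\<close>)
      fix i assume "i \<le> l"
      then show "\<bar>real (frontier \<omega> (k i) t) - \<beta> * real t - 3 * real t powr c * sqrt (real t) * real i\<bar>
                  \<le> 3/2 * real t powr c * sqrt (real t)"
        using dev[of i] seq by (simp add: F_def mult.assoc)
    qed
    then show "\<omega> \<in> G" using \<omega> unfolding G_def by auto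
  qed
  have "measure M G \<ge> measure M (space M - Bad)" using sub Gs by (intro P.finite_measure_mono) auto
  also have "measure M (space M - Bad) = 1 - measure M Bad" using Bads by (rule P.prob_compl)
  finally show ?thesis using mBad unfolding G_def M_def by simp
qed


lemma F1: fixes q c :: real assumes "q > 0" "c > 0" "c < 1/2"
  shows "filterlim (\<lambda>x::real. (x+1) * exp (- q * x powr (c + 1/2) / 4) / exp (- (x powr (2*c)))) (nhds 0) at_top"
  using assms by real_asymp
lemma F2: fixes c :: real assumes "c > 0" "c < 1/2"
  shows "filterlim (\<lambda>x::real. (x+1)^2 * exp (- 2 * x powr (2*c)) / exp (- (x powr (2*c)))) (nhds 0) at_top"
  using assms by real_asymp
lemma F3: fixes c a :: real assumes "c > 0" "c < 1/2"
  shows "filterlim (\<lambda>x::real. (a * x powr (c + 1/2) + 2) / x) (nhds 0) at_top"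
  using assms by real_asymp
lemma F4: fixes c :: real assumes "c > 0" "c < 1/2"
  shows "filterlim (\<lambda>x::real. x powr (c + 1/2)) at_top at_top"
  using assms by real_asymp

lemma eventually_conds:
  fixes \<alpha> \<beta> c :: real
  assumes a: "0 < \<alpha>" "\<alpha> < 1" and b: "0 < \<beta>" "\<beta> < 1" and cc: "0 < c" "c < 1/2"
  shows "\<exists>T::nat. \<forall>t\<ge>T. 8 \<le> real t powr (c + 1/2) \<and>
    (3 / (1 - \<beta>) + 1/4) * real t powr (c + 1/2) + 2 \<le> real t / 2 \<and>
    (real t + 1) * exp (ln (1 - \<alpha>) * real t powr (c + 1/2) / 4)
             + 2 * (real t + 1)^2 * exp (- 2 * real t powr (2*c)) \<le> exp (- (real t powr (2*c)))"
proof -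
  define q where "q = - ln (1 - \<alpha>)"
  have q: "q > 0" using a by (simp add: q_def)
  have lnq: "ln (1 - \<alpha>) = - q" by (simp add: q_def)
  have e1: "eventually (\<lambda>x::real. (x+1) * exp (- q * x powr (c + 1/2) / 4) / exp (- (x powr (2*c))) < 1/2) at_top"
    by (rule order_tendstoD(2)[OF F1[OF q cc]]) simp
  have e2: "eventually (\<lambda>x::real. (x+1)^2 * exp (- 2 * x powr (2*c)) / exp (- (x powr (2*c))) < 1/4) at_top"
    by (rule order_tendstoD(2)[OF F2[OF cc]]) simp
  have e3: "eventually (\<lambda>x::real. ((3 / (1 - \<beta>) + 1/4) * x powr (c + 1/2) + 2) / x < 1/2) at_top"
    by (rule order_tendstoD(2)[OF F3[OF cc]]) simp
  have e4: "eventually (\<lambda>x::real. 8 \<le> x powr (c + 1/2)) at_top"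
    using F4[OF cc] by (simp add: filterlim_at_top)
  have e5: "eventually (\<lambda>x::real. 1 \<le> x) at_top" by (rule eventually_ge_at_top)
  have "eventually (\<lambda>x::real. (x+1) * exp (- q * x powr (c + 1/2) / 4) / exp (- (x powr (2*c))) < 1/2 \<and>
     (x+1)^2 * exp (- 2 * x powr (2*c)) / exp (- (x powr (2*c))) < 1/4 \<and>
     ((3 / (1 - \<beta>) + 1/4) * x powr (c + 1/2) + 2) / x < 1/2 \<and> 8 \<le> x powr (c + 1/2) \<and> 1 \<le> x) at_top"
    using e1 e2 e3 e4 e5 by eventually_elim auto
  then obtain x0 where x0: "\<And>x. x \<ge> x0 \<Longrightarrow> (x+1) * exp (- q * x powr (c + 1/2) / 4) / exp (- (x powr (2*c))) < 1/2 \<and>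
     (x+1)^2 * exp (- 2 * x powr (2*c)) / exp (- (x powr (2*c))) < 1/4 \<and>
     ((3 / (1 - \<beta>) + 1/4) * x powr (c + 1/2) + 2) / x < 1/2 \<and> 8 \<le> x powr (c + 1/2) \<and> 1 \<le> x"
    unfolding eventually_at_top_linorder by blast
  show ?thesis
  proof (intro exI[of _ "nat \<lceil>x0\<rceil>"] allI impI)
    fix t :: nat assume "nat \<lceil>x0\<rceil> \<le> t"
    then have "x0 \<le> real t" by linarith
    note X = x0[OF this]
    let ?E = "exp (- (real t powr (2*c)))"
    have Ep: "?E > 0" by simp
    have tp: "real t \<ge> 1" using X by simp
    have i1: "(real t + 1) * exp (- q * real t powr (c + 1/2) / 4) < ?E / 2"
      using X Ep by (simp add: divide_less_eq)
    have i2: "(real t + 1)^2 * exp (- 2 * real t powr (2*c)) < ?E / 4"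
      using X Ep by (simp add: divide_less_eq)
    have i3: "(3 / (1 - \<beta>) + 1/4) * real t powr (c + 1/2) + 2 < real t / 2"
      using X tp by (simp add: divide_less_eq)
    have "exp (ln (1 - \<alpha>) * real t powr (c + 1/2) / 4) = exp (- q * real t powr (c + 1/2) / 4)"
      by (simp add: lnq)
    then show "8 \<le> real t powr (c + 1/2) \<and>
      (3 / (1 - \<beta>) + 1/4) * real t powr (c + 1/2) + 2 \<le> real t / 2 \<and>
      (real t + 1) * exp (ln (1 - \<alpha>) * real t powr (c + 1/2) / 4)
             + 2 * (real t + 1)^2 * exp (- 2 * real t powr (2*c)) \<le> ?E"
      using X i1 i2 i3 by auto
  qed
qed

theorem mainTheorem7:
  fixes \<beta> :: real
  assumes "0 < \<beta>" and "\<beta> < 1"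
  shows "\<exists>C\<^sub>\<beta> > 0. \<forall>\<alpha> c :: real. 0 < \<alpha> \<and> \<alpha> < 1 \<and> 0 < c \<and> c < 1/2 \<longrightarrow>
    (\<exists>K > 0. \<exists>L > 0. \<exists>\<epsilon> :: nat \<Rightarrow> real. \<epsilon> \<longlonglongrightarrow> 0 \<and>
      (\<forall>t :: nat.
        measure (decoupled_space \<alpha> \<beta>)
          {\<omega> \<in> space (decoupled_space \<alpha> \<beta>).
             \<exists>l :: nat. real l \<ge> L * real t powr (1/2 - c) \<and>
               (\<exists>k :: nat \<Rightarrow> nat. strict_mono_on {..l} k \<and>
                  inj_on (\<lambda>i. frontier \<omega> (k i) t) {..l} \<and>
                  (\<forall>i \<le> l. \<bar>real (frontier \<omega> (k i) t) - \<beta> * real t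
                              - C\<^sub>\<beta> * real t powr c * sqrt (real t) * real i\<bar>
                           \<le> K * real t powr c * sqrt (real t)))}
        \<ge> 1 - exp (- (1 + \<epsilon> t) * real t powr (2 * c))))"
proof -
  have b: "0 < \<beta>" "\<beta> < 1" using assms by auto
  have main: "\<forall>\<alpha> c :: real. 0 < \<alpha> \<and> \<alpha> < 1 \<and> 0 < c \<and> c < 1/2 \<longrightarrow>
      (\<exists>\<epsilon> :: nat \<Rightarrow> real. \<epsilon> \<longlonglongrightarrow> 0 \<and>
      (\<forall>t :: nat. measure (decoupled_space \<alpha> \<beta>)
          {\<omega> \<in> space (decoupled_space \<alpha> \<beta>). goodP \<beta> c t (\<lambda>k. frontier \<omega> k t)}
        \<ge> 1 - exp (- (1 + \<epsilon> t) * real t powr (2 * c))))"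
  proof (intro allI impI)
    fix \<alpha> c :: real assume H: "0 < \<alpha> \<and> \<alpha> < 1 \<and> 0 < c \<and> c < 1/2"
    then have a: "0 < \<alpha>" "\<alpha> < 1" and cc: "0 < c" "c < 1/2" by auto
    obtain T where T: "\<And>t. t \<ge> T \<Longrightarrow> 8 \<le> real t powr (c + 1/2) \<and>
      (3 / (1 - \<beta>) + 1/4) * real t powr (c + 1/2) + 2 \<le> real t / 2 \<and>
      (real t + 1) * exp (ln (1 - \<alpha>) * real t powr (c + 1/2) / 4)
             + 2 * (real t + 1)^2 * exp (- 2 * real t powr (2*c)) \<le> exp (- (real t powr (2*c)))"
      using eventually_conds[OF a b cc] by blast
    define \<epsilon> where "\<epsilon> t = (if T \<le> t then 0 else - 1 :: real)" for t :: nat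
    have lim: "\<epsilon> \<longlonglongrightarrow> 0"
    proof (rule tendsto_eventually)
      show "eventually (\<lambda>t. \<epsilon> t = 0) sequentially"
        unfolding \<epsilon>_def eventually_sequentially by auto
    qed
    have bound: "measure (decoupled_space \<alpha> \<beta>)
          {\<omega> \<in> space (decoupled_space \<alpha> \<beta>). goodP \<beta> c t (\<lambda>k. frontier \<omega> k t)}
        \<ge> 1 - exp (- (1 + \<epsilon> t) * real t powr (2 * c))" for t
    proof (cases "T \<le> t")
      case True
      have "1 - exp (- (real t powr (2*c))) \<le> measure (decoupled_space \<alpha> \<beta>)
          {\<omega> \<in> space (decoupled_space \<alpha> \<beta>). goodP \<beta> c t (\<lambda>k. frontier \<omega> k t)}"
        using T[OF True] by (intro fixed_t a b cc) auto
      then show ?thesis using True by (simp add: \<epsilon>_def)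
    next
      case False
      then show ?thesis by (simp add: \<epsilon>_def)
    qed
    show "\<exists>\<epsilon> :: nat \<Rightarrow> real. \<epsilon> \<longlonglongrightarrow> 0 \<and>
      (\<forall>t :: nat. measure (decoupled_space \<alpha> \<beta>)
          {\<omega> \<in> space (decoupled_space \<alpha> \<beta>). goodP \<beta> c t (\<lambda>k. frontier \<omega> k t)}
        \<ge> 1 - exp (- (1 + \<epsilon> t) * real t powr (2 * c)))"
      using lim bound by blast
  qed
  show ?thesis
  proof (rule exI[of _ "3 :: real"], rule conjI)
    show "(0::real) < 3" by simp
    show "\<forall>\<alpha> c :: real. 0 < \<alpha> \<and> \<alpha> < 1 \<and> 0 < c \<and> c < 1/2 \<longrightarrow>
    (\<exists>K > 0. \<exists>L > 0. \<exists>\<epsilon> :: nat \<Rightarrow> real. \<epsilon> \<longlonglongrightarrow> 0 \<and>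
      (\<forall>t :: nat.
        measure (decoupled_space \<alpha> \<beta>)
          {\<omega> \<in> space (decoupled_space \<alpha> \<beta>).
             \<exists>l :: nat. real l \<ge> L * real t powr (1/2 - c) \<and>
               (\<exists>k :: nat \<Rightarrow> nat. strict_mono_on {..l} k \<and>
                  inj_on (\<lambda>i. frontier \<omega> (k i) t) {..l} \<and>
                  (\<forall>i \<le> l. \<bar>real (frontier \<omega> (k i) t) - \<beta> * real t
                              - 3 * real t powr c * sqrt (real t) * real i\<bar>
                           \<le> K * real t powr c * sqrt (real t)))}
        \<ge> 1 - exp (- (1 + \<epsilon> t) * real t powr (2 * c))))"
    proof (intro allI impI)
      fix \<alpha> c :: real assume H: "0 < \<alpha> \<and> \<alpha> < 1 \<and> 0 < c \<and> c < 1/2"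
      obtain \<epsilon> :: "nat \<Rightarrow> real" where e: "\<epsilon> \<longlonglongrightarrow> 0" and
        m: "\<And>t. measure (decoupled_space \<alpha> \<beta>)
          {\<omega> \<in> space (decoupled_space \<alpha> \<beta>). goodP \<beta> c t (\<lambda>k. frontier \<omega> k t)}
        \<ge> 1 - exp (- (1 + \<epsilon> t) * real t powr (2 * c))"
        using main H by blast
      show "\<exists>K > 0. \<exists>L > 0. \<exists>\<epsilon> :: nat \<Rightarrow> real. \<epsilon> \<longlonglongrightarrow> 0 \<and>
      (\<forall>t :: nat.
        measure (decoupled_space \<alpha> \<beta>)
          {\<omega> \<in> space (decoupled_space \<alpha> \<beta>).
             \<exists>l :: nat. real l \<ge> L * real t powr (1/2 - c) \<and>
               (\<exists>k :: nat \<Rightarrow> nat. strict_mono_on {..l} k \<and>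
                  inj_on (\<lambda>i. frontier \<omega> (k i) t) {..l} \<and>
                  (\<forall>i \<le> l. \<bar>real (frontier \<omega> (k i) t) - \<beta> * real t
                              - 3 * real t powr c * sqrt (real t) * real i\<bar>
                           \<le> K * real t powr c * sqrt (real t)))}
        \<ge> 1 - exp (- (1 + \<epsilon> t) * real t powr (2 * c)))"
      proof (rule exI[of _ "3/2 :: real"], rule conjI, simp, rule exI[of _ "(1 - \<beta>) / 6"], rule conjI)
        show "0 < (1 - \<beta>) / 6" using b by simp
        show "\<exists>\<epsilon> :: nat \<Rightarrow> real. \<epsilon> \<longlonglongrightarrow> 0 \<and>
      (\<forall>t :: nat.
        measure (decoupled_space \<alpha> \<beta>)
          {\<omega> \<in> space (decoupled_space \<alpha> \<beta>).
             \<exists>l :: nat. real l \<ge> (1 - \<beta>) / 6 * real t powr (1/2 - c) \<and>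
               (\<exists>k :: nat \<Rightarrow> nat. strict_mono_on {..l} k \<and>
                  inj_on (\<lambda>i. frontier \<omega> (k i) t) {..l} \<and>
                  (\<forall>i \<le> l. \<bar>real (frontier \<omega> (k i) t) - \<beta> * real t
                              - 3 * real t powr c * sqrt (real t) * real i\<bar>
                           \<le> 3/2 * real t powr c * sqrt (real t)))}
        \<ge> 1 - exp (- (1 + \<epsilon> t) * real t powr (2 * c)))"
          using e m unfolding goodP_def by blast
      qed
    qed
  qed
qed

end
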